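(* Let $\mathcal{G}=(\mathcal{N},\mathcal{E})$ be a connected graph with $N$ nodes and $E$ edges, let $A\in\mathbb{R}^{E\times N}$ be its edge-node incidence matrix, and let $x\in\mathbb{R}^E$ be an arbitrary vector of line reactances (entries are not required to be positive). Let $p\in\mathbb{R}^N$ satisfy $\mathbf{1}^\top p=0$, and fix a reference node $r\in\mathcal{N}$ and a reference angle $\theta_r\in\mathbb{R}$. Consider the DC power flow equations $$A^\top f = p,\qquad \operatorname{diag}(x)\, f = A\theta,$$ in the unknowns $f\in\mathbb{R}^E$ and $\theta\in\mathbb{R}^N$, where the $r$-th entry of $\theta$ is required to equal $\theta_r$. Then these equations have a unique solution $(f,\theta)$ if and only if one of the following holds: (1) the graph is radial (has no cycles, so $E=N-1$); or (2) the graph is meshed (contains a cycle) and the $C\times C$ matrix $\mathbf{N}^\top\operatorname{diag}(x)\mathbf{N}$ is invertible, where $\mathbf{N}$ is the cycle matrix defined in the context.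
   Context: Incidence matrix: after assigning an arbitrary direction $e=(m,n)$ to each edge, $A_{e,k}=+1$ if $k=m$, $A_{e,k}=-1$ if $k=n$, and $A_{e,k}=0$ otherwise. For a connected graph $A\mathbf{1}=\mathbf{0}$ and $\operatorname{rank}(A)=N-1$. $\operatorname{diag}(x)$ is the diagonal matrix with diagonal $x$. Cycle matrix: a cycle is a closed sequence of adjacent edges; for a cycle $\mathcal{C}$ with a chosen traversal direction, its indicator vector $n^{\mathcal{C}}\in\{0,\pm1\}^E$ has $n^{\mathcal{C}}_e=0$ if $e$ is not in the cycle, $+1$ if $e$ is directed along the traversal direction, and $-1$ otherwise. A meshed graph has $C=E-N+1$ independent cycles; $\mathbf{N}\in\mathbb{R}^{E\times C}$ is obtained by stacking as columns the indicator vectors of $C$ independent cycles, so that $\operatorname{null}(A^\top)=\operatorname{range}(\mathbf{N})$. *)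

theory Defs
  imports "Jordan_Normal_Form.Matrix"
begin

text \<open>A (multi)graph with nodes 0..<N and edges 0..<E; edge e is given the
  arbitrary orientation from node src e to node tgt e (no self-loops).\<close>

definition graph_ok :: "nat \<Rightarrow> nat \<Rightarrow> (nat \<Rightarrow> nat) \<Rightarrow> (nat \<Rightarrow> nat) \<Rightarrow> bool" where
  "graph_ok N E src tgt \<longleftrightarrow> (\<forall>e<E. src e < N \<and> tgt e < N \<and> src e \<noteq> tgt e)"

definition adjacent :: "nat \<Rightarrow> (nat \<Rightarrow> nat) \<Rightarrow> (nat \<Rightarrow> nat) \<Rightarrow> nat \<Rightarrow> nat \<Rightarrow> bool" where
  "adjacent E src tgt u v \<longleftrightarrow>
     (\<exists>e<E. (src e = u \<and> tgt e = v) \<or> (src e = v \<and> tgt e = u))"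

definition connected_graph :: "nat \<Rightarrow> nat \<Rightarrow> (nat \<Rightarrow> nat) \<Rightarrow> (nat \<Rightarrow> nat) \<Rightarrow> bool" where
  "connected_graph N E src tgt \<longleftrightarrow> graph_ok N E src tgt \<and> N \<ge> 1 \<and>
     (\<forall>u<N. \<forall>v<N. (adjacent E src tgt)\<^sup>*\<^sup>* u v)"

definition incidence_matrix :: "nat \<Rightarrow> nat \<Rightarrow> (nat \<Rightarrow> nat) \<Rightarrow> (nat \<Rightarrow> nat) \<Rightarrow> real mat" where
  "incidence_matrix N E src tgt =
     mat E N (\<lambda>(e,k). if k = src e then 1 else if k = tgt e then -1 else 0)"

definition is_cycle :: "nat \<Rightarrow> (nat \<Rightarrow> nat) \<Rightarrow> (nat \<Rightarrow> nat) \<Rightarrow> nat list \<Rightarrow> nat list \<Rightarrow> bool" where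
  "is_cycle E src tgt vs es \<longleftrightarrow> length vs = length es \<and> length es \<ge> 1 \<and>
     distinct vs \<and> distinct es \<and>
     (\<forall>i<length es. es!i < E \<and>
        ((src (es!i) = vs!i \<and> tgt (es!i) = vs!((i+1) mod length vs)) \<or>
         (tgt (es!i) = vs!i \<and> src (es!i) = vs!((i+1) mod length vs))))"

definition has_cycle :: "nat \<Rightarrow> (nat \<Rightarrow> nat) \<Rightarrow> (nat \<Rightarrow> nat) \<Rightarrow> bool" where
  "has_cycle E src tgt \<longleftrightarrow> (\<exists>vs es. is_cycle E src tgt vs es)"

text \<open>Indicator vector of a cycle: +1 on edges directed along the traversal,
  -1 on edges directed against it, 0 on edges not in the cycle.\<close>
definition cycle_indicator :: "nat \<Rightarrow> (nat \<Rightarrow> nat) \<Rightarrow> (nat \<Rightarrow> nat) \<Rightarrow> nat list \<Rightarrow> nat list \<Rightarrow> real vec" where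
  "cycle_indicator E src tgt vs es = vec E (\<lambda>e.
     if \<exists>i<length es. es!i = e \<and> src e = vs!i then 1
     else if \<exists>i<length es. es!i = e \<and> tgt e = vs!i then -1
     else 0)"

definition cycle_matrix :: "nat \<Rightarrow> nat \<Rightarrow> (nat \<Rightarrow> nat) \<Rightarrow> (nat \<Rightarrow> nat) \<Rightarrow> real mat \<Rightarrow> bool" where
  "cycle_matrix N E src tgt Nm \<longleftrightarrow>
     Nm \<in> carrier_mat E (E + 1 - N) \<and>
     (\<forall>j<E + 1 - N. \<exists>vs es. is_cycle E src tgt vs es \<and>
                        col Nm j = cycle_indicator E src tgt vs es) \<and>
     (\<forall>c :: nat \<Rightarrow> real. (\<forall>e<E. (\<Sum>j<E + 1 - N. c j * Nm $$ (e, j)) = 0)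
                           \<longrightarrow> (\<forall>j<E + 1 - N. c j = 0))"

definition dc_pf_solution ::
  "nat \<Rightarrow> nat \<Rightarrow> (nat \<Rightarrow> nat) \<Rightarrow> (nat \<Rightarrow> nat) \<Rightarrow> real vec \<Rightarrow> real vec \<Rightarrow> nat \<Rightarrow> real
   \<Rightarrow> real vec \<Rightarrow> real vec \<Rightarrow> bool" where
  "dc_pf_solution N E src tgt x p r \<theta>r f \<theta> \<longleftrightarrow>
     f \<in> carrier_vec E \<and> \<theta> \<in> carrier_vec N \<and>
     transpose_mat (incidence_matrix N E src tgt) *\<^sub>v f = p \<and>
     mat_diag E (\<lambda>e. x $ e) *\<^sub>v f = incidence_matrix N E src tgt *\<^sub>v \<theta> \<and>
     \<theta> $ r = \<theta>r"

end

theory Submission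
  imports Defs "Jordan_Normal_Form.Determinant"
begin


lemma mat_inj_surj:
  fixes M :: "real mat"
  assumes M: "M \<in> carrier_mat n n"
    and inj: "\<And>v. v \<in> carrier_vec n \<Longrightarrow> M *\<^sub>v v = 0\<^sub>v n \<Longrightarrow> v = 0\<^sub>v n"
    and b: "b \<in> carrier_vec n"
  shows "\<exists>v\<in>carrier_vec n. M *\<^sub>v v = b"
proof -
  have "det M \<noteq> 0" using det_0_iff_vec_prod_zero_field[OF M] inj by blast
  from det_non_zero_imp_unit[OF M this, of "()"]
  obtain B where B: "B \<in> carrier_mat n n" and MB: "M * B = 1\<^sub>m n"
    unfolding Units_def ring_mat_def by auto
  have "M *\<^sub>v (B *\<^sub>v b) = b"
    using assoc_mult_mat_vec[OF M B b, symmetric] MB b by simp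
  moreover have "B *\<^sub>v b \<in> carrier_vec n" using B b by simp
  ultimately show ?thesis by blast
qed

lemma mat_inj_card:
  fixes M :: "real mat"
  assumes M: "M \<in> carrier_mat m n"
    and inj: "\<And>v. v \<in> carrier_vec n \<Longrightarrow> M *\<^sub>v v = 0\<^sub>v m \<Longrightarrow> v = 0\<^sub>v n"
  shows "n \<le> m"
proof (rule ccontr)
  assume "\<not> n \<le> m"
  hence mn: "m < n" by simp
  define M' where "M' = mat n n (\<lambda>(i,j). if i < m then M $$ (i,j) else 0)"
  have M': "M' \<in> carrier_mat n n" unfolding M'_def by simp
  have rowM': "i < m \<Longrightarrow> row M' i = row M i" for i
    using M mn unfolding M'_def by (auto simp: row_def)
  have inj': "v = 0\<^sub>v n" if v: "v \<in> carrier_vec n" and Mv: "M' *\<^sub>v v = 0\<^sub>v n" for v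
  proof -
    have "M *\<^sub>v v = 0\<^sub>v m"
    proof
      fix i assume i: "i < dim_vec (0\<^sub>v m :: real vec)"
      hence "(M' *\<^sub>v v) $ i = 0" using Mv mn by simp
      thus "(M *\<^sub>v v) $ i = 0\<^sub>v m $ i" using i M M' rowM' mn by simp
    qed (use M in simp)
    thus ?thesis using inj v by blast
  qed
  obtain v where v: "v \<in> carrier_vec n" and Mv: "M' *\<^sub>v v = unit_vec n (n - 1)"
    using mat_inj_surj[OF M' inj', of "unit_vec n (n-1)"] by auto
  have "(M' *\<^sub>v v) $ (n - 1) = 1" using Mv mn by simp
  moreover have "row M' (n - 1) = 0\<^sub>v n" using mn unfolding M'_def by (auto simp: row_def)
  hence "(M' *\<^sub>v v) $ (n - 1) = 0" using M' v mn by simp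
  ultimately show False by simp
qed

lemma fun_to_mat:
  fixes M :: "'i \<Rightarrow> 'j \<Rightarrow> real"
  assumes I: "finite I" and J: "finite J"
    and inj: "\<And>v. \<forall>i\<in>I. (\<Sum>j\<in>J. M i j * v j) = 0 \<Longrightarrow> \<forall>j\<in>J. v j = 0"
  obtains hi hj where "bij_betw hi {0..<card I} I" "bij_betw hj {0..<card J} J"
    "mat (card I) (card J) (\<lambda>(a,b). M (hi a) (hj b)) \<in> carrier_mat (card I) (card J)"
    "\<And>v. v \<in> carrier_vec (card J) \<Longrightarrow>
       mat (card I) (card J) (\<lambda>(a,b). M (hi a) (hj b)) *\<^sub>v v = 0\<^sub>v (card I) \<Longrightarrow> v = 0\<^sub>v (card J)"
    "\<And>v a. v \<in> carrier_vec (card J) \<Longrightarrow> a < card I \<Longrightarrow>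
       (mat (card I) (card J) (\<lambda>(a,b). M (hi a) (hj b)) *\<^sub>v v) $ a =
       (\<Sum>j\<in>J. M (hi a) j * v $ (the_inv_into {0..<card J} hj j))"
proof -
  obtain hi where hi: "bij_betw hi {0..<card I} I" using ex_bij_betw_nat_finite[OF I] by blast
  obtain hj where hj: "bij_betw hj {0..<card J} J" using ex_bij_betw_nat_finite[OF J] by blast
  define Mt where "Mt = mat (card I) (card J) (\<lambda>(a,b). M (hi a) (hj b))"
  have Mt: "Mt \<in> carrier_mat (card I) (card J)" unfolding Mt_def by simp
  have inv: "the_inv_into {0..<card J} hj (hj b) = b" if "b < card J" for b
    using hj that by (simp add: bij_betw_def the_inv_into_f_f)
  have comp: "(Mt *\<^sub>v v) $ a = (\<Sum>j\<in>J. M (hi a) j * v $ (the_inv_into {0..<card J} hj j))"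
    if v: "v \<in> carrier_vec (card J)" and a: "a < card I" for v a
  proof -
    have "(Mt *\<^sub>v v) $ a = (\<Sum>b\<in>{0..<card J}. M (hi a) (hj b) * v $ b)"
      using v a unfolding Mt_def by (simp add: scalar_prod_def row_def)
    also have "\<dots> = (\<Sum>b\<in>{0..<card J}. M (hi a) (hj b) * v $ (the_inv_into {0..<card J} hj (hj b)))"
      by (rule sum.cong) (auto simp: inv)
    also have "\<dots> = (\<Sum>j\<in>J. M (hi a) j * v $ (the_inv_into {0..<card J} hj j))"
      by (rule sum.reindex_bij_betw[OF hj, where g = "\<lambda>j. M (hi a) j * v $ (the_inv_into {0..<card J} hj j)"])
    finally show ?thesis .
  qed
  have injM: "v = 0\<^sub>v (card J)" if v: "v \<in> carrier_vec (card J)" and Mv: "Mt *\<^sub>v v = 0\<^sub>v (card I)" for v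
  proof -
    let ?w = "\<lambda>j. v $ (the_inv_into {0..<card J} hj j)"
    have "\<forall>i\<in>I. (\<Sum>j\<in>J. M i j * ?w j) = 0"
    proof
      fix i assume "i \<in> I"
      then obtain a where a: "a < card I" "i = hi a" using hi unfolding bij_betw_def by (metis atLeastLessThan_iff imageE)
      have "(Mt *\<^sub>v v) $ a = 0" using Mv a by simp
      thus "(\<Sum>j\<in>J. M i j * ?w j) = 0" using comp[OF v a(1)] a by simp
    qed
    hence w0: "\<forall>j\<in>J. ?w j = 0" by (rule inj)
    show ?thesis
    proof
      fix b assume "b < dim_vec (0\<^sub>v (card J) :: real vec)"
      hence b: "b < card J" by simp
      hence "hj b \<in> J" using hj by (auto simp: bij_betw_def)
      thus "v $ b = 0\<^sub>v (card J) $ b" using w0 inv[OF b] b by force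
    qed (use v in simp)
  qed
  show ?thesis using that[OF hi hj Mt[unfolded Mt_def] injM[unfolded Mt_def] comp[unfolded Mt_def]] .
qed

lemma fun_inj_card:
  fixes M :: "'i \<Rightarrow> 'j \<Rightarrow> real"
  assumes I: "finite I" and J: "finite J"
    and inj: "\<And>v. \<forall>i\<in>I. (\<Sum>j\<in>J. M i j * v j) = 0 \<Longrightarrow> \<forall>j\<in>J. v j = 0"
  shows "card J \<le> card I"
proof -
  show ?thesis
  proof (rule fun_to_mat[OF I J inj])
    fix hi hj
    assume "mat (card I) (card J) (\<lambda>(a,b). M (hi a) (hj b)) \<in> carrier_mat (card I) (card J)"
    "\<And>v. v \<in> carrier_vec (card J) \<Longrightarrow>
       mat (card I) (card J) (\<lambda>(a,b). M (hi a) (hj b)) *\<^sub>v v = 0\<^sub>v (card I) \<Longrightarrow> v = 0\<^sub>v (card J)"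
    thus ?thesis by (rule mat_inj_card)
  qed
qed

lemma fun_inj_surj:
  fixes M :: "'i \<Rightarrow> 'j \<Rightarrow> real"
  assumes I: "finite I" and J: "finite J" and c: "card I = card J"
    and inj: "\<And>v. \<forall>i\<in>I. (\<Sum>j\<in>J. M i j * v j) = 0 \<Longrightarrow> \<forall>j\<in>J. v j = 0"
  shows "\<exists>v. \<forall>i\<in>I. (\<Sum>j\<in>J. M i j * v j) = b i"
proof -
  obtain hi hj where hi: "bij_betw hi {0..<card I} I" and "bij_betw hj {0..<card J} J" and
    Mt: "mat (card I) (card J) (\<lambda>(a,b). M (hi a) (hj b)) \<in> carrier_mat (card I) (card J)" and
    injM: "\<And>v. v \<in> carrier_vec (card J) \<Longrightarrow>
       mat (card I) (card J) (\<lambda>(a,b). M (hi a) (hj b)) *\<^sub>v v = 0\<^sub>v (card I) \<Longrightarrow> v = 0\<^sub>v (card J)" and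
    comp: "\<And>v a. v \<in> carrier_vec (card J) \<Longrightarrow> a < card I \<Longrightarrow>
       (mat (card I) (card J) (\<lambda>(a,b). M (hi a) (hj b)) *\<^sub>v v) $ a =
       (\<Sum>j\<in>J. M (hi a) j * v $ (the_inv_into {0..<card J} hj j))"
    using fun_to_mat[OF I J inj] by blast
  define bv where "bv = vec (card I) (\<lambda>a. b (hi a))"
  obtain v where v: "v \<in> carrier_vec (card J)"
    and Mv: "mat (card I) (card J) (\<lambda>(a,b). M (hi a) (hj b)) *\<^sub>v v = bv"
    using mat_inj_surj[OF Mt[unfolded c] injM[unfolded c], of bv] unfolding bv_def c by auto
  show ?thesis
  proof (intro exI ballI)
    fix i assume "i \<in> I"
    then obtain a where a: "a < card I" "i = hi a" using hi unfolding bij_betw_def by (metis atLeastLessThan_iff imageE)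
    show "(\<Sum>j\<in>J. M i j * v $ (the_inv_into {0..<card J} hj j)) = b i"
      using comp[OF v a(1)] Mv a unfolding bv_def by simp
  qed
qed



definition incf :: "(nat \<Rightarrow> nat) \<Rightarrow> (nat \<Rightarrow> nat) \<Rightarrow> nat \<Rightarrow> nat \<Rightarrow> real" where
  "incf src tgt e k = (if k = src e then 1 else if k = tgt e then -1 else 0)"

lemma sum_rot:
  fixes h :: "nat \<Rightarrow> real"
  assumes "L \<ge> 1"
  shows "(\<Sum>i<L. h ((i+1) mod L)) = (\<Sum>i<L. h i)"
proof -
  obtain m where L: "L = Suc m" using assms by (cases L) auto
  have "(\<Sum>i<L. h ((i+1) mod L)) = (\<Sum>i<m. h ((i+1) mod L)) + h ((m+1) mod L)"
    unfolding L by simp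
  also have "(\<Sum>i<m. h ((i+1) mod L)) = (\<Sum>i<m. h (Suc i))"
    by (rule sum.cong) (auto simp: L)
  also have "h ((m+1) mod L) = h 0" by (simp add: L)
  also have "(\<Sum>i<m. h (Suc i)) + h 0 = (\<Sum>i<L. h i)"
    unfolding L sum.lessThan_Suc_shift by simp
  finally show ?thesis .
qed

lemma cycle_balance:
  assumes cyc: "is_cycle E src tgt vs es"
    and ne: "\<forall>e<E. src e \<noteq> tgt e"
  shows "(\<Sum>e<E. incf src tgt e k * cycle_indicator E src tgt vs es $ e) = 0"
proof -
  let ?L = "length es"
  let ?ind = "\<lambda>e. cycle_indicator E src tgt vs es $ e"
  let ?g = "\<lambda>e. incf src tgt e k * ?ind e"
  let ?d = "\<lambda>b. if b then 1 else (0::real)"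
  from cyc have len: "length vs = ?L" and L1: "?L \<ge> 1" and dvs: "distinct vs" and des: "distinct es"
    and edge: "\<And>i. i < ?L \<Longrightarrow> es!i < E \<and>
        ((src (es!i) = vs!i \<and> tgt (es!i) = vs!((i+1) mod ?L)) \<or>
         (tgt (es!i) = vs!i \<and> src (es!i) = vs!((i+1) mod ?L)))"
    unfolding is_cycle_def by auto
  have setE: "set es \<subseteq> {..<E}" using edge by (auto simp: in_set_conv_nth)
  have ind_out: "?ind e = 0" if "e < E" "e \<notin> set es" for e
    using that unfolding cycle_indicator_def by (auto simp: in_set_conv_nth)
  have "(\<Sum>e<E. ?g e) = (\<Sum>e\<in>set es. ?g e)"
    by (rule sum.mono_neutral_cong_right) (use setE ind_out in auto)
  also have "\<dots> = (\<Sum>i<?L. ?g (es!i))"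
    by (rule sum.reindex_bij_betw[symmetric], rule bij_betw_nth[OF des]) auto
  also have "\<dots> = (\<Sum>i<?L. ?d (k = vs!i) - ?d (k = vs!((i+1) mod ?L)))"
  proof (rule sum.cong)
    fix i assume "i \<in> {..<?L}"
    hence i: "i < ?L" by simp
    have uniq: "\<And>i'. i' < ?L \<Longrightarrow> es!i' = es!i \<longleftrightarrow> i' = i"
      using des i by (simp add: nth_eq_iff_index_eq)
    have e: "es!i < E" using edge[OF i] by simp
    have ind: "?ind (es!i) = (if src (es!i) = vs!i then 1 else if tgt (es!i) = vs!i then -1 else 0)"
      unfolding cycle_indicator_def using e uniq i by auto
    show "?g (es!i) = ?d (k = vs!i) - ?d (k = vs!((i+1) mod ?L))"
      using edge[OF i] ne e unfolding ind incf_def by auto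
  qed (simp)
  also have "\<dots> = (\<Sum>i<?L. ?d (k = vs!i)) - (\<Sum>i<?L. ?d (k = vs!((i+1) mod ?L)))"
    by (simp add: sum_subtractf)
  also have "(\<Sum>i<?L. ?d (k = vs!((i+1) mod ?L))) = (\<Sum>i<?L. ?d (k = vs!i))"
    using sum_rot[OF L1, of "\<lambda>i. ?d (k = vs!i)"] .
  finally show ?thesis by simp
qed



locale dcg =
  fixes N E :: nat and src tgt :: "nat \<Rightarrow> nat" and Nm :: "real mat" and r :: nat
  assumes conn: "connected_graph N E src tgt" and r: "r < N"
    and cm: "cycle_matrix N E src tgt Nm"
begin

abbreviation "C \<equiv> E + 1 - N"
abbreviation "inc \<equiv> incf src tgt"

lemma go: "e < E \<Longrightarrow> src e < N \<and> tgt e < N \<and> src e \<noteq> tgt e"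
  using conn unfolding connected_graph_def graph_ok_def by auto

lemma N1: "N \<ge> 1" using conn unfolding connected_graph_def by auto

lemma Nm_carrier: "Nm \<in> carrier_mat E C" using cm unfolding cycle_matrix_def by auto

lemma inc_sum: "e < E \<Longrightarrow> (\<Sum>k<N. inc e k * \<phi> k) = \<phi> (src e) - \<phi> (tgt e)"
proof -
  assume e: "e < E"
  have "(\<Sum>k<N. inc e k * \<phi> k) =
        (\<Sum>k<N. (if k = src e then \<phi> (src e) else 0) - (if k = tgt e then \<phi> (tgt e) else 0))"
    by (rule sum.cong) (use go[OF e] in \<open>auto simp: incf_def\<close>)
  also have "\<dots> = \<phi> (src e) - \<phi> (tgt e)"
    using go[OF e] by (simp add: sum_subtractf)
  finally show ?thesis .
qed

lemma colsum: "(\<Sum>k<N. \<Sum>e<E. inc e k * f e) = 0"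
proof -
  have "(\<Sum>k<N. \<Sum>e<E. inc e k * f e) = (\<Sum>e<E. (\<Sum>k<N. inc e k * (\<lambda>_. 1) k) * f e)"
    by (subst sum.swap) (simp add: sum_distrib_right)
  also have "\<dots> = 0" by (rule sum.neutral) (use inc_sum[of _ "\<lambda>_. 1"] in simp)
  finally show ?thesis .
qed

lemma const: assumes "\<forall>e<E. \<phi> (src e) = \<phi> (tgt e)" "u < N" "v < N"
  shows "\<phi> u = \<phi> v"
proof -
  have adj: "\<phi> a = \<phi> b" if "adjacent E src tgt a b" for a b
    using that assms(1) unfolding adjacent_def by auto
  have "(adjacent E src tgt)\<^sup>*\<^sup>* u v" using conn assms unfolding connected_graph_def by auto
  thus ?thesis by (induction rule: rtranclp_induct) (auto dest: adj)
qed

lemma cyc: assumes j: "j < C" shows "(\<Sum>e<E. inc e k * Nm $$ (e,j)) = 0"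
proof -
  obtain vs es where c: "is_cycle E src tgt vs es" and col: "col Nm j = cycle_indicator E src tgt vs es"
    using cm j unfolding cycle_matrix_def by blast
  have "(\<Sum>e<E. inc e k * Nm $$ (e,j)) = (\<Sum>e<E. inc e k * cycle_indicator E src tgt vs es $ e)"
    by (rule sum.cong) (use Nm_carrier j in \<open>auto simp flip: col\<close>)
  also have "\<dots> = 0" by (rule cycle_balance[OF c]) (use go in auto)
  finally show ?thesis .
qed

lemma swap: "(\<Sum>e<E. (\<Sum>k<N. inc e k * \<phi> k) * f e) = (\<Sum>k<N. \<phi> k * (\<Sum>e<E. inc e k * f e))"
  by (simp add: sum_distrib_right sum_distrib_left mult_ac) (rule sum.swap)

lemma orth2: "(\<Sum>e<E. (\<Sum>k<N. inc e k * \<phi> k) * (\<Sum>j<C. c j * Nm $$ (e,j))) = 0"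
proof -
  have "(\<Sum>e<E. (\<Sum>k<N. inc e k * \<phi> k) * (\<Sum>j<C. c j * Nm $$ (e,j)))
     = (\<Sum>k<N. \<phi> k * (\<Sum>j<C. c j * (\<Sum>e<E. inc e k * Nm $$ (e,j))))"
  proof -
    have *: "(\<Sum>e<E. inc e k * (\<Sum>j<C. c j * Nm $$ (e,j))) = (\<Sum>j<C. c j * (\<Sum>e<E. inc e k * Nm $$ (e,j)))" for k
    proof -
      have "(\<Sum>e<E. inc e k * (\<Sum>j<C. c j * Nm $$ (e,j))) = (\<Sum>e<E. \<Sum>j<C. c j * (inc e k * Nm $$ (e,j)))"
        by (simp add: sum_distrib_left mult_ac)
      also have "\<dots> = (\<Sum>j<C. \<Sum>e<E. c j * (inc e k * Nm $$ (e,j)))" by (rule sum.swap)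
      also have "\<dots> = (\<Sum>j<C. c j * (\<Sum>e<E. inc e k * Nm $$ (e,j)))" by (simp add: sum_distrib_left)
      finally show ?thesis .
    qed
    show ?thesis unfolding swap * ..
  qed
  also have "\<dots> = 0" by (simp add: cyc)
  finally show ?thesis .
qed

lemma indep: "\<forall>e<E. (\<Sum>j<C. c j * Nm $$ (e,j)) = 0 \<Longrightarrow> j < C \<Longrightarrow> c j = 0"
  using cm unfolding cycle_matrix_def by blast

lemma sq0: fixes u :: "nat \<Rightarrow> real" shows "(\<Sum>e<E. u e * u e) = 0 \<Longrightarrow> e < E \<Longrightarrow> u e = 0"
  by (subst (asm) sum_nonneg_eq_0_iff) auto

definition MU :: "nat + unit \<Rightarrow> nat + nat \<Rightarrow> real" where
  "MU i j = (case i of Inl e \<Rightarrow> (case j of Inl k \<Rightarrow> inc e k | Inr l \<Rightarrow> Nm $$ (e,l))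
                     | Inr _ \<Rightarrow> (case j of Inl k \<Rightarrow> (if k = r then 1 else 0) | Inr _ \<Rightarrow> 0))"

lemma MU_rows:
  "(\<Sum>jj\<in>{..<N} <+> {..<C}. MU (Inl e) jj * v jj) =
     (\<Sum>k<N. inc e k * v (Inl k)) + (\<Sum>j<C. v (Inr j) * Nm $$ (e,j))"
  "(\<Sum>jj\<in>{..<N} <+> {..<C}. MU (Inr u) jj * v jj) = v (Inl r)"
proof -
  show "(\<Sum>jj\<in>{..<N} <+> {..<C}. MU (Inl e) jj * v jj) =
     (\<Sum>k<N. inc e k * v (Inl k)) + (\<Sum>j<C. v (Inr j) * Nm $$ (e,j))"
    by (auto simp: sum.Plus MU_def mult.commute)
  have "(\<Sum>x<N. (if x = r then 1 else 0) * v (Inl x)) = (\<Sum>x<N. if x = r then v (Inl x) else 0)"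
    by (rule sum.cong) auto
  also have "\<dots> = v (Inl r)" using r by simp
  finally show "(\<Sum>jj\<in>{..<N} <+> {..<C}. MU (Inr u) jj * v jj) = v (Inl r)"
    by (simp add: sum.Plus MU_def)
qed

lemma MU_inj:
  assumes "\<forall>i\<in>{..<E} <+> (UNIV :: unit set). (\<Sum>jj\<in>{..<N} <+> {..<C}. MU i jj * v jj) = 0"
  shows "\<forall>jj\<in>{..<N} <+> {..<C}. v jj = 0"
proof -
  define \<phi> where "\<phi> k = v (Inl k)" for k
  define c where "c j = v (Inr j)" for j
  define u where "u e = (\<Sum>k<N. inc e k * \<phi> k)" for e
  define w where "w e = (\<Sum>j<C. c j * Nm $$ (e,j))" for e
  have uw: "u e + w e = 0" if "e < E" for e
  proof -
    have "Inl e \<in> {..<E} <+> (UNIV :: unit set)" using that by auto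
    thus ?thesis using assms MU_rows(1)[of e v] unfolding u_def w_def \<phi>_def c_def by (auto simp: mult.commute)
  qed
  have "Inr () \<in> {..<E} <+> (UNIV :: unit set)" by auto
  hence \<phi>r: "\<phi> r = 0" using assms MU_rows(2)[of "()" v] unfolding \<phi>_def by metis
  have "(\<Sum>e<E. u e * u e) = (\<Sum>e<E. u e * (u e + w e)) - (\<Sum>e<E. u e * w e)"
    by (simp add: algebra_simps sum_subtractf sum.distrib)
  also have "\<dots> = 0" using uw orth2[of \<phi> c] unfolding u_def w_def by simp
  finally have u0: "\<And>e. e < E \<Longrightarrow> u e = 0" using sq0 by blast
  have w0: "\<forall>e<E. w e = 0" using uw u0 by simp
  have "\<forall>e<E. \<phi> (src e) = \<phi> (tgt e)" using u0 inc_sum unfolding u_def by simp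
  hence \<phi>0: "k < N \<Longrightarrow> \<phi> k = 0" for k using const[of \<phi> k r] r \<phi>r by simp
  have c0: "j < C \<Longrightarrow> c j = 0" for j using indep w0 unfolding w_def by blast
  show ?thesis using \<phi>0 c0 unfolding \<phi>_def c_def by auto
qed

lemma card_EN: "N \<le> E + 1"
proof -
  have "card ({..<N} <+> {..<C}) \<le> card ({..<E} <+> (UNIV :: unit set))"
    by (rule fun_inj_card[of _ _ MU]) (use MU_inj in auto)
  hence "N + C \<le> E + 1" by (simp add: card_Plus)
  thus ?thesis by linarith
qed

lemma decomp: "\<exists>\<phi> c. \<forall>e<E. y e = (\<Sum>k<N. inc e k * \<phi> k) + (\<Sum>j<C. c j * Nm $$ (e,j))"
proof -
  have "card ({..<E} <+> (UNIV :: unit set)) = card ({..<N} <+> {..<C})"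
    using card_EN by (simp add: card_Plus)
  from fun_inj_surj[OF _ _ this, of MU "case_sum y (\<lambda>_. 0)"] MU_inj
  obtain v where v: "\<forall>i\<in>{..<E} <+> (UNIV :: unit set). (\<Sum>jj\<in>{..<N} <+> {..<C}. MU i jj * v jj) = case_sum y (\<lambda>_. 0) i"
    by auto
  show ?thesis
  proof (intro exI allI impI)
    fix e assume "e < E"
    thus "y e = (\<Sum>k<N. inc e k * v (Inl k)) + (\<Sum>j<C. v (Inr j) * Nm $$ (e,j))"
    proof -
      have "Inl e \<in> {..<E} <+> (UNIV :: unit set)" using \<open>e < E\<close> by auto
      thus ?thesis using v MU_rows(1)[of e v] by force
    qed
  qed
qed

lemma AT_w: "(\<Sum>e<E. inc e k * (\<Sum>j<C. c j * Nm $$ (e,j))) = 0"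
proof -
  have "(\<Sum>e<E. inc e k * (\<Sum>j<C. c j * Nm $$ (e,j))) = (\<Sum>e<E. \<Sum>j<C. c j * (inc e k * Nm $$ (e,j)))"
    by (simp add: sum_distrib_left mult_ac)
  also have "\<dots> = (\<Sum>j<C. \<Sum>e<E. c j * (inc e k * Nm $$ (e,j)))" by (rule sum.swap)
  also have "\<dots> = (\<Sum>j<C. c j * (\<Sum>e<E. inc e k * Nm $$ (e,j)))" by (simp add: sum_distrib_left)
  also have "\<dots> = 0" by (simp add: cyc)
  finally show ?thesis .
qed

lemma orth1: "j < C \<Longrightarrow> (\<Sum>e<E. (\<Sum>k<N. inc e k * \<phi> k) * Nm $$ (e,j)) = 0"
  unfolding swap by (simp add: cyc)

lemma node_sum: assumes "\<forall>k<N. (\<Sum>e<E. inc e k * f e) + t = q k"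
  shows "real N * t = (\<Sum>k<N. q k)"
proof -
  have "(\<Sum>k<N. q k) = (\<Sum>k<N. (\<Sum>e<E. inc e k * f e) + t)" using assms by simp
  also have "\<dots> = real N * t" by (simp add: sum.distrib colsum)
  finally show ?thesis by simp
qed

definition gm :: "(nat \<Rightarrow> real) \<Rightarrow> nat \<Rightarrow> nat \<Rightarrow> real" where
  "gm xf i j = (\<Sum>e<E. Nm $$ (e,i) * xf e * Nm $$ (e,j))"

lemma Gc_eq: "(\<Sum>j<C. gm xf i j * c j) = (\<Sum>e<E. Nm $$ (e,i) * xf e * (\<Sum>j<C. c j * Nm $$ (e,j)))"
proof -
  have "(\<Sum>j<C. gm xf i j * c j) = (\<Sum>j<C. \<Sum>e<E. Nm $$ (e,i) * xf e * (c j * Nm $$ (e,j)))"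
    unfolding gm_def by (simp add: sum_distrib_right sum_distrib_left mult_ac)
  also have "\<dots> = (\<Sum>e<E. \<Sum>j<C. Nm $$ (e,i) * xf e * (c j * Nm $$ (e,j)))" by (rule sum.swap)
  also have "\<dots> = (\<Sum>e<E. Nm $$ (e,i) * xf e * (\<Sum>j<C. c j * Nm $$ (e,j)))" by (simp add: sum_distrib_left)
  finally show ?thesis .
qed

definition Kern :: "(nat \<Rightarrow> real) \<Rightarrow> bool" where
  "Kern xf \<longleftrightarrow> (\<forall>f \<theta>. ((\<forall>k<N. (\<Sum>e<E. inc e k * f e) + \<theta> r = 0) \<and>
       (\<forall>e<E. xf e * f e = \<theta> (src e) - \<theta> (tgt e))) \<longrightarrow> (\<forall>e<E. f e = 0) \<and> (\<forall>k<N. \<theta> k = 0))"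

definition Ginj :: "(nat \<Rightarrow> real) \<Rightarrow> bool" where
  "Ginj xf \<longleftrightarrow> (\<forall>c. (\<forall>i<C. (\<Sum>j<C. gm xf i j * c j) = 0) \<longrightarrow> (\<forall>j<C. c j = 0))"

lemma kern_from_ginj: assumes G: "Ginj xf" shows "Kern xf"
  unfolding Kern_def
proof (intro allI impI)
  fix f \<theta> :: "nat \<Rightarrow> real"
  assume "(\<forall>k<N. (\<Sum>e<E. inc e k * f e) + \<theta> r = 0) \<and> (\<forall>e<E. xf e * f e = \<theta> (src e) - \<theta> (tgt e))"
  hence node: "\<forall>k<N. (\<Sum>e<E. inc e k * f e) + \<theta> r = 0"
    and edge: "\<forall>e<E. xf e * f e = \<theta> (src e) - \<theta> (tgt e)" by auto
  have "real N * \<theta> r = 0" using node_sum[OF node] by simp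
  hence \<theta>r: "\<theta> r = 0" using N1 by simp
  hence AT: "\<forall>k<N. (\<Sum>e<E. inc e k * f e) = 0" using node by simp
  obtain \<phi> c where dec: "\<forall>e<E. f e = (\<Sum>k<N. inc e k * \<phi> k) + (\<Sum>j<C. c j * Nm $$ (e,j))"
    using decomp[of f] by blast
  define u where "u e = (\<Sum>k<N. inc e k * \<phi> k)" for e
  define w where "w e = (\<Sum>j<C. c j * Nm $$ (e,j))" for e
  have "(\<Sum>e<E. u e * u e) = (\<Sum>e<E. u e * f e) - (\<Sum>e<E. u e * w e)"
    using dec unfolding u_def w_def by (simp add: algebra_simps sum_subtractf sum.distrib)
  also have "(\<Sum>e<E. u e * f e) = 0" unfolding u_def swap using AT by simp
  also have "(\<Sum>e<E. u e * w e) = 0" unfolding u_def w_def by (rule orth2)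
  finally have "(\<Sum>e<E. u e * u e) = 0" by simp
  hence u0: "\<And>e. e < E \<Longrightarrow> u e = 0" using sq0 by blast
  hence fw: "\<And>e. e < E \<Longrightarrow> f e = w e" using dec unfolding u_def w_def by simp
  have "\<forall>i<C. (\<Sum>j<C. gm xf i j * c j) = 0"
  proof (intro allI impI)
    fix i assume i: "i < C"
    have "(\<Sum>j<C. gm xf i j * c j) = (\<Sum>e<E. Nm $$ (e,i) * (xf e * f e))"
      unfolding Gc_eq by (rule sum.cong) (auto simp: fw w_def)
    also have "\<dots> = (\<Sum>e<E. (\<Sum>k<N. inc e k * \<theta> k) * Nm $$ (e,i))"
      by (rule sum.cong) (auto simp: edge inc_sum)
    also have "\<dots> = 0" using orth1[OF i] .
    finally show "(\<Sum>j<C. gm xf i j * c j) = 0" .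
  qed
  hence c0: "\<forall>j<C. c j = 0" using G unfolding Ginj_def by blast
  have f0: "\<forall>e<E. f e = 0" using fw c0 unfolding w_def by simp
  hence eq: "\<forall>e<E. \<theta> (src e) = \<theta> (tgt e)" using edge by simp
  have "\<forall>k<N. \<theta> k = 0"
  proof (intro allI impI)
    fix k assume "k < N"
    from const[OF eq this r] show "\<theta> k = 0" using \<theta>r by simp
  qed
  thus "(\<forall>e<E. f e = 0) \<and> (\<forall>k<N. \<theta> k = 0)" using f0 by simp
qed

lemma ginj_from_kern: assumes K: "Kern xf" shows "Ginj xf"
  unfolding Ginj_def
proof (rule allI, rule impI)
  fix c :: "nat \<Rightarrow> real"
  assume Gc: "\<forall>i<C. (\<Sum>j<C. gm xf i j * c j) = 0"
  define f where "f e = (\<Sum>j<C. c j * Nm $$ (e,j))" for e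
  obtain \<phi> d where dec: "\<forall>e<E. xf e * f e = (\<Sum>k<N. inc e k * \<phi> k) + (\<Sum>j<C. d j * Nm $$ (e,j))"
    using decomp[of "\<lambda>e. xf e * f e"] by blast
  define u where "u e = (\<Sum>k<N. inc e k * \<phi> k)" for e
  define w where "w e = (\<Sum>j<C. d j * Nm $$ (e,j))" for e
  have "(\<Sum>e<E. w e * w e) = (\<Sum>e<E. w e * (xf e * f e)) - (\<Sum>e<E. u e * w e)"
    using dec unfolding u_def w_def by (simp add: algebra_simps sum_subtractf sum.distrib)
  also have "(\<Sum>e<E. u e * w e) = 0" unfolding u_def w_def by (rule orth2)
  also have "(\<Sum>e<E. w e * (xf e * f e)) = (\<Sum>j<C. d j * (\<Sum>i<C. gm xf j i * c i))"
  proof -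
    have "(\<Sum>e<E. w e * (xf e * f e)) = (\<Sum>e<E. \<Sum>j<C. d j * (Nm $$ (e,j) * xf e * f e))"
      unfolding w_def by (simp add: sum_distrib_right sum_distrib_left mult_ac)
    also have "\<dots> = (\<Sum>j<C. \<Sum>e<E. d j * (Nm $$ (e,j) * xf e * f e))" by (rule sum.swap)
    also have "\<dots> = (\<Sum>j<C. d j * (\<Sum>i<C. gm xf j i * c i))"
      unfolding Gc_eq f_def by (simp add: sum_distrib_left)
    finally show ?thesis .
  qed
  also have "\<dots> = 0" using Gc by simp
  finally have "(\<Sum>e<E. w e * w e) = 0" by simp
  hence w0: "\<And>e. e < E \<Longrightarrow> w e = 0" using sq0 by blast
  define \<theta> where "\<theta> k = \<phi> k - \<phi> r" for k
  have node: "\<forall>k<N. (\<Sum>e<E. inc e k * f e) + \<theta> r = 0"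
    unfolding f_def \<theta>_def using AT_w by simp
  have edge: "\<forall>e<E. xf e * f e = \<theta> (src e) - \<theta> (tgt e)"
    using dec w0 inc_sum unfolding w_def \<theta>_def by simp
  have "(\<forall>e<E. f e = 0) \<and> (\<forall>k<N. \<theta> k = 0)"
    using K[unfolded Kern_def, rule_format, of f \<theta>] node edge by blast
  hence "\<forall>e<E. (\<Sum>j<C. c j * Nm $$ (e,j)) = 0" unfolding f_def by blast
  thus "\<forall>j<C. c j = 0" using indep[of c] by blast
qed

lemma kern_iff: "Kern xf \<longleftrightarrow> Ginj xf" by (rule iffI[OF ginj_from_kern kern_from_ginj])

definition sys :: "(nat \<Rightarrow> real) \<Rightarrow> (nat \<Rightarrow> real) \<Rightarrow> real \<Rightarrow> (nat \<Rightarrow> real) \<Rightarrow> (nat \<Rightarrow> real) \<Rightarrow> bool" where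
  "sys p xf \<theta>r f \<theta> \<longleftrightarrow> (\<forall>k<N. (\<Sum>e<E. inc e k * f e) = p k) \<and>
     (\<forall>e<E. xf e * f e = \<theta> (src e) - \<theta> (tgt e)) \<and> \<theta> r = \<theta>r"

definition MS :: "(nat \<Rightarrow> real) \<Rightarrow> nat + nat \<Rightarrow> nat + nat \<Rightarrow> real" where
  "MS xf i j = (case i of Inl k \<Rightarrow> (case j of Inl e \<Rightarrow> inc e k | Inr l \<Rightarrow> if l = r then 1 else 0)
                     | Inr e \<Rightarrow> (case j of Inl e' \<Rightarrow> if e' = e then xf e else 0 | Inr k \<Rightarrow> - inc e k))"

lemma MS_row1: "(\<Sum>jj\<in>{..<E} <+> {..<N}. MS xf (Inl k) jj * v jj) = (\<Sum>e<E. inc e k * v (Inl e)) + v (Inr r)"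
proof -
  have "(\<Sum>l<N. (if l = r then 1 else 0) * v (Inr l)) = (\<Sum>l<N. if l = r then v (Inr l) else 0)"
    by (rule sum.cong) auto
  also have "\<dots> = v (Inr r)" using r by simp
  finally show ?thesis by (simp add: sum.Plus MS_def)
qed

lemma MS_row2: "e < E \<Longrightarrow> (\<Sum>jj\<in>{..<E} <+> {..<N}. MS xf (Inr e) jj * v jj) = xf e * v (Inl e) - (\<Sum>k<N. inc e k * v (Inr k))"
proof -
  assume e: "e < E"
  have "(\<Sum>l<E. (if l = e then xf e else 0) * v (Inl l)) = (\<Sum>l<E. if l = e then xf e * v (Inl l) else 0)"
    by (rule sum.cong) auto
  also have "\<dots> = xf e * v (Inl e)" using e by simp
  finally show ?thesis by (simp add: sum.Plus MS_def sum_negf)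
qed

lemma MS_inj:
  assumes K: "Kern xf"
    and v: "\<forall>i\<in>{..<N} <+> {..<E}. (\<Sum>jj\<in>{..<E} <+> {..<N}. MS xf i jj * v jj) = 0"
  shows "\<forall>jj\<in>{..<E} <+> {..<N}. v jj = 0"
proof -
  define f where "f e = v (Inl e)" for e
  define \<theta> where "\<theta> k = v (Inr k)" for k
  have node: "\<forall>k<N. (\<Sum>e<E. inc e k * f e) + \<theta> r = 0"
  proof (intro allI impI)
    fix k assume "k < N"
    hence "Inl k \<in> {..<N} <+> {..<E}" by auto
    thus "(\<Sum>e<E. inc e k * f e) + \<theta> r = 0" using v MS_row1[of xf k v] unfolding f_def \<theta>_def by metis
  qed
  have edge: "\<forall>e<E. xf e * f e = \<theta> (src e) - \<theta> (tgt e)"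
  proof (intro allI impI)
    fix e assume e: "e < E"
    hence "Inr e \<in> {..<N} <+> {..<E}" by auto
    hence "xf e * f e - (\<Sum>k<N. inc e k * \<theta> k) = 0" using v MS_row2[OF e, of xf v] unfolding f_def \<theta>_def by metis
    thus "xf e * f e = \<theta> (src e) - \<theta> (tgt e)" using inc_sum[OF e] by simp
  qed
  have "(\<forall>e<E. f e = 0) \<and> (\<forall>k<N. \<theta> k = 0)"
    using K[unfolded Kern_def, rule_format, of f \<theta>] node edge by blast
  thus ?thesis unfolding f_def \<theta>_def by auto
qed

lemma sys_exists:
  assumes K: "Kern xf" and p: "(\<Sum>k<N. p k) = 0"
  shows "\<exists>f \<theta>. sys p xf \<theta>r f \<theta>"
proof -
  have "card ({..<N} <+> {..<E}) = card ({..<E} <+> {..<N})" by (simp add: card_Plus)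
  from fun_inj_surj[OF _ _ this, of "MS xf" "case_sum (\<lambda>k. p k + \<theta>r) (\<lambda>_. 0)"] MS_inj[OF K]
  obtain v where v: "\<forall>i\<in>{..<N} <+> {..<E}. (\<Sum>jj\<in>{..<E} <+> {..<N}. MS xf i jj * v jj) = case_sum (\<lambda>k. p k + \<theta>r) (\<lambda>_. 0) i"
    by auto
  define f where "f e = v (Inl e)" for e
  define \<theta> where "\<theta> k = v (Inr k)" for k
  have node: "\<forall>k<N. (\<Sum>e<E. inc e k * f e) + \<theta> r = p k + \<theta>r"
  proof (intro allI impI)
    fix k assume "k < N"
    hence "Inl k \<in> {..<N} <+> {..<E}" by auto
    thus "(\<Sum>e<E. inc e k * f e) + \<theta> r = p k + \<theta>r" using v MS_row1[of xf k v] unfolding f_def \<theta>_def by force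
  qed
  have edge: "\<forall>e<E. xf e * f e = \<theta> (src e) - \<theta> (tgt e)"
  proof (intro allI impI)
    fix e assume e: "e < E"
    hence "Inr e \<in> {..<N} <+> {..<E}" by auto
    hence "xf e * f e - (\<Sum>k<N. inc e k * \<theta> k) = 0" using v MS_row2[OF e, of xf v] unfolding f_def \<theta>_def by force
    thus "xf e * f e = \<theta> (src e) - \<theta> (tgt e)" using inc_sum[OF e] by simp
  qed
  have "real N * \<theta> r = (\<Sum>k<N. p k + \<theta>r)" by (rule node_sum[OF node])
  also have "\<dots> = real N * \<theta>r" using p by (simp add: sum.distrib)
  finally have "\<theta> r = \<theta>r" using N1 by simp
  hence "sys p xf \<theta>r f \<theta>" unfolding sys_def using node edge by simp
  thus ?thesis by blast
qed

lemma sys_unique: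
  assumes K: "Kern xf" and s1: "sys p xf \<theta>r f1 \<theta>1" and s2: "sys p xf \<theta>r f2 \<theta>2"
  shows "(\<forall>e<E. f1 e = f2 e) \<and> (\<forall>k<N. \<theta>1 k = \<theta>2 k)"
proof -
  let ?f = "\<lambda>e. f1 e - f2 e" and ?t = "\<lambda>k. \<theta>1 k - \<theta>2 k"
  have node: "\<forall>k<N. (\<Sum>e<E. inc e k * ?f e) + ?t r = 0"
    using s1 s2 unfolding sys_def by (simp add: algebra_simps sum_subtractf)
  have edge: "\<forall>e<E. xf e * ?f e = ?t (src e) - ?t (tgt e)"
    using s1 s2 unfolding sys_def by (simp add: algebra_simps)
  have "(\<forall>e<E. ?f e = 0) \<and> (\<forall>k<N. ?t k = 0)"
    using K[unfolded Kern_def, rule_format, of ?f ?t] node edge by blast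
  thus ?thesis by simp
qed

lemma kern_from_usol:
  assumes ex: "sys p xf \<theta>r f \<theta>"
    and un: "\<And>f1 \<theta>1 f2 \<theta>2. sys p xf \<theta>r f1 \<theta>1 \<Longrightarrow> sys p xf \<theta>r f2 \<theta>2 \<Longrightarrow>
              (\<forall>e<E. f1 e = f2 e) \<and> (\<forall>k<N. \<theta>1 k = \<theta>2 k)"
  shows "Kern xf"
  unfolding Kern_def
proof (intro allI impI)
  fix f0 \<theta>0 :: "nat \<Rightarrow> real"
  assume "(\<forall>k<N. (\<Sum>e<E. inc e k * f0 e) + \<theta>0 r = 0) \<and> (\<forall>e<E. xf e * f0 e = \<theta>0 (src e) - \<theta>0 (tgt e))"
  hence node: "\<forall>k<N. (\<Sum>e<E. inc e k * f0 e) + \<theta>0 r = 0"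
    and edge: "\<forall>e<E. xf e * f0 e = \<theta>0 (src e) - \<theta>0 (tgt e)" by auto
  have "real N * \<theta>0 r = 0" using node_sum[OF node] by simp
  hence t0: "\<theta>0 r = 0" using N1 by simp
  have "sys p xf \<theta>r (\<lambda>e. f e + f0 e) (\<lambda>k. \<theta> k + \<theta>0 k)"
    using ex node edge t0 unfolding sys_def by (simp add: algebra_simps sum.distrib)
  from un[OF ex this] show "(\<forall>e<E. f0 e = 0) \<and> (\<forall>k<N. \<theta>0 k = 0)" by simp
qed


lemma inc_entries: "incidence_matrix N E src tgt = mat E N (\<lambda>(e,k). inc e k)"
  unfolding incidence_matrix_def incf_def by simp

lemma AT_vec: "f \<in> carrier_vec E \<Longrightarrow> k < N \<Longrightarrow>
   (transpose_mat (incidence_matrix N E src tgt) *\<^sub>v f) $ k = (\<Sum>e<E. inc e k * f $ e)"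
  by (simp add: inc_entries scalar_prod_def atLeast0LessThan)

lemma A_vec: "\<theta> \<in> carrier_vec N \<Longrightarrow> e < E \<Longrightarrow>
   (incidence_matrix N E src tgt *\<^sub>v \<theta>) $ e = \<theta> $ (src e) - \<theta> $ (tgt e)"
  using inc_sum[of e "\<lambda>k. \<theta> $ k"] by (simp add: inc_entries scalar_prod_def atLeast0LessThan)

lemma D_vec: "f \<in> carrier_vec E \<Longrightarrow> e < E \<Longrightarrow> (mat_diag E xf *\<^sub>v f) $ e = xf e * f $ e"
proof -
  assume f: "f \<in> carrier_vec E" and e: "e < E"
  have "(mat_diag E xf *\<^sub>v f) $ e = (\<Sum>i<E. (if e = i then xf i else 0) * f $ i)"
    using f e by (simp add: mat_diag_def scalar_prod_def atLeast0LessThan)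
  also have "\<dots> = (\<Sum>i<E. if i = e then xf e * f $ e else 0)" by (rule sum.cong) auto
  also have "\<dots> = xf e * f $ e" using e by simp
  finally show ?thesis .
qed

lemma sol_iff:
  assumes x: "x \<in> carrier_vec E" and p: "p \<in> carrier_vec N"
  shows "dc_pf_solution N E src tgt x p r \<theta>r f \<theta> \<longleftrightarrow>
    f \<in> carrier_vec E \<and> \<theta> \<in> carrier_vec N \<and> sys (\<lambda>k. p $ k) (\<lambda>e. x $ e) \<theta>r (\<lambda>e. f $ e) (\<lambda>k. \<theta> $ k)"
proof (cases "f \<in> carrier_vec E \<and> \<theta> \<in> carrier_vec N")
  case True
  hence f: "f \<in> carrier_vec E" and t: "\<theta> \<in> carrier_vec N" by auto
  have 1: "transpose_mat (incidence_matrix N E src tgt) *\<^sub>v f = p \<longleftrightarrow> (\<forall>k<N. (\<Sum>e<E. inc e k * f $ e) = p $ k)"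
    using p f AT_vec[OF f] by (auto simp: vec_eq_iff inc_entries)
  have 2: "mat_diag E (\<lambda>e. x $ e) *\<^sub>v f = incidence_matrix N E src tgt *\<^sub>v \<theta> \<longleftrightarrow>
     (\<forall>e<E. x $ e * f $ e = \<theta> $ (src e) - \<theta> $ (tgt e))"
    using f t D_vec[OF f] A_vec[OF t] by (auto simp: vec_eq_iff inc_entries mat_diag_def)
  show ?thesis unfolding dc_pf_solution_def sys_def 1 2 using True by auto
qed (auto simp: dc_pf_solution_def)

lemma lhs_iff:
  assumes x: "x \<in> carrier_vec E" and p: "p \<in> carrier_vec N" and ps: "(\<Sum>i<N. p $ i) = 0"
  shows "(\<exists>!(f, \<theta>). dc_pf_solution N E src tgt x p r \<theta>r f \<theta>) \<longleftrightarrow> Kern (\<lambda>e. x $ e)"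
proof
  assume "\<exists>!(f, \<theta>). dc_pf_solution N E src tgt x p r \<theta>r f \<theta>"
  then obtain f \<theta> where s: "dc_pf_solution N E src tgt x p r \<theta>r f \<theta>"
    and u: "\<And>f' \<theta>'. dc_pf_solution N E src tgt x p r \<theta>r f' \<theta>' \<Longrightarrow> (f', \<theta>') = (f, \<theta>)"
    by (auto simp: Ex1_def)
  show "Kern (\<lambda>e. x $ e)"
  proof (rule kern_from_usol)
    show "sys (\<lambda>k. p $ k) (\<lambda>e. x $ e) \<theta>r (\<lambda>e. f $ e) (\<lambda>k. \<theta> $ k)" using s sol_iff[OF x p] by blast
  next
    fix f1 \<theta>1 f2 \<theta>2
    assume s1: "sys (\<lambda>k. p $ k) (\<lambda>e. x $ e) \<theta>r f1 \<theta>1" and s2: "sys (\<lambda>k. p $ k) (\<lambda>e. x $ e) \<theta>r f2 \<theta>2"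
    have c1: "sys (\<lambda>k. p $ k) (\<lambda>e. x $ e) \<theta>r (\<lambda>e. vec E f1 $ e) (\<lambda>k. vec N \<theta>1 $ k)"
      using s1 r go unfolding sys_def by simp
    have c2: "sys (\<lambda>k. p $ k) (\<lambda>e. x $ e) \<theta>r (\<lambda>e. vec E f2 $ e) (\<lambda>k. vec N \<theta>2 $ k)"
      using s2 r go unfolding sys_def by simp
    have "dc_pf_solution N E src tgt x p r \<theta>r (vec E f1) (vec N \<theta>1)"
      using sol_iff[OF x p] c1 by simp
    hence "(vec E f1, vec N \<theta>1) = (f, \<theta>)" by (rule u)
    moreover have "dc_pf_solution N E src tgt x p r \<theta>r (vec E f2) (vec N \<theta>2)"
      using sol_iff[OF x p] c2 by simp
    hence "(vec E f2, vec N \<theta>2) = (f, \<theta>)" by (rule u)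
    ultimately
    have "vec E f1 = vec E f2" "vec N \<theta>1 = vec N \<theta>2" by auto
    thus "(\<forall>e<E. f1 e = f2 e) \<and> (\<forall>k<N. \<theta>1 k = \<theta>2 k)"
      by (metis index_vec)
  qed
next
  assume K: "Kern (\<lambda>e. x $ e)"
  obtain f \<theta> where s: "sys (\<lambda>k. p $ k) (\<lambda>e. x $ e) \<theta>r f \<theta>"
    using sys_exists[OF K, of "\<lambda>k. p $ k" \<theta>r] ps by auto
  have c: "sys (\<lambda>k. p $ k) (\<lambda>e. x $ e) \<theta>r (\<lambda>e. vec E f $ e) (\<lambda>k. vec N \<theta> $ k)"
    using s r go unfolding sys_def by simp
  show "\<exists>!(f, \<theta>). dc_pf_solution N E src tgt x p r \<theta>r f \<theta>"
  proof (rule ex1I[of _ "(vec E f, vec N \<theta>)"])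
    show "case (vec E f, vec N \<theta>) of (f, \<theta>) \<Rightarrow> dc_pf_solution N E src tgt x p r \<theta>r f \<theta>"
      using c sol_iff[OF x p] by simp
  next
    fix y assume "case y of (f', \<theta>') \<Rightarrow> dc_pf_solution N E src tgt x p r \<theta>r f' \<theta>'"
    then obtain f' \<theta>' where y: "y = (f', \<theta>')" and s': "dc_pf_solution N E src tgt x p r \<theta>r f' \<theta>'"
      by (cases y) auto
    from s' sol_iff[OF x p] have cf: "f' \<in> carrier_vec E" "\<theta>' \<in> carrier_vec N"
      and ss: "sys (\<lambda>k. p $ k) (\<lambda>e. x $ e) \<theta>r (\<lambda>e. f' $ e) (\<lambda>k. \<theta>' $ k)" by auto
    from sys_unique[OF K ss c] have "f' = vec E f" "\<theta>' = vec N \<theta>"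
      using cf by (auto simp: vec_eq_iff)
    thus "y = (vec E f, vec N \<theta>)" using y by simp
  qed
qed

lemma G_eq: "transpose_mat Nm * mat_diag E xf * Nm = mat C C (\<lambda>(i,j). gm xf i j)"
proof -
  have "transpose_mat Nm * mat_diag E xf = mat C E (\<lambda>(i,e). transpose_mat Nm $$ (i,e) * xf e)"
    by (rule mat_diag_mult_right) (use Nm_carrier in auto)
  thus ?thesis using Nm_carrier
    by (auto intro!: eq_matI simp: gm_def scalar_prod_def atLeast0LessThan mult_ac)
qed

lemma inv_iff: "invertible_mat (transpose_mat Nm * mat_diag E xf * Nm) \<longleftrightarrow> Ginj xf"
proof -
  define G where "G = mat C C (\<lambda>(i,j). gm xf i j)"
  have Gc: "G \<in> carrier_mat C C" unfolding G_def by simp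
  have Gv: "v \<in> carrier_vec C \<Longrightarrow> i < C \<Longrightarrow> (G *\<^sub>v v) $ i = (\<Sum>j<C. gm xf i j * v $ j)" for v i
    unfolding G_def by (simp add: scalar_prod_def atLeast0LessThan)
  have vinj: "(\<forall>v\<in>carrier_vec C. G *\<^sub>v v = 0\<^sub>v C \<longrightarrow> v = 0\<^sub>v C) \<longleftrightarrow> Ginj xf"
  proof
    assume vi: "\<forall>v\<in>carrier_vec C. G *\<^sub>v v = 0\<^sub>v C \<longrightarrow> v = 0\<^sub>v C"
    show "Ginj xf" unfolding Ginj_def
    proof (intro allI impI)
      fix c :: "nat \<Rightarrow> real" and j
      assume h: "\<forall>i<C. (\<Sum>j<C. gm xf i j * c j) = 0" and j: "j < C"
      have "G *\<^sub>v vec C c = 0\<^sub>v C"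
        using h Gv[of "vec C c"] Gc by (auto simp: vec_eq_iff)
      hence "vec C c = 0\<^sub>v C" using vi by auto
      thus "c j = 0" using j by (metis index_vec index_zero_vec(1))
    qed
  next
    assume gi: "Ginj xf"
    show "\<forall>v\<in>carrier_vec C. G *\<^sub>v v = 0\<^sub>v C \<longrightarrow> v = 0\<^sub>v C"
    proof (intro ballI impI)
      fix v :: "real vec" assume v: "v \<in> carrier_vec C" and Gv0: "G *\<^sub>v v = 0\<^sub>v C"
      have "\<forall>i<C. (\<Sum>j<C. gm xf i j * v $ j) = 0"
      proof (intro allI impI)
        fix i assume i: "i < C"
        have "(G *\<^sub>v v) $ i = 0" using Gv0 i by simp
        thus "(\<Sum>j<C. gm xf i j * v $ j) = 0" using Gv[OF v i] by simp
      qed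
      hence "\<forall>j<C. v $ j = 0" using gi unfolding Ginj_def by blast
      thus "v = 0\<^sub>v C" using v by (auto simp: vec_eq_iff)
    qed
  qed
  have "invertible_mat G \<longleftrightarrow> (\<forall>v\<in>carrier_vec C. G *\<^sub>v v = 0\<^sub>v C \<longrightarrow> v = 0\<^sub>v C)"
  proof
    assume "invertible_mat G"
    then obtain B where GB: "G * B = 1\<^sub>m C" and BG: "B * G = 1\<^sub>m (dim_row B)"
      using Gc unfolding invertible_mat_def inverts_mat_def by auto
    have dB: "dim_row B = C" using arg_cong[OF BG, of dim_col] Gc by simp
    have dB2: "dim_col B = C" using arg_cong[OF GB, of dim_col] by simp
    have B: "B \<in> carrier_mat C C" using dB dB2 by auto
    show "\<forall>v\<in>carrier_vec C. G *\<^sub>v v = 0\<^sub>v C \<longrightarrow> v = 0\<^sub>v C"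
    proof (intro ballI impI)
      fix v :: "real vec" assume v: "v \<in> carrier_vec C" and Gv0: "G *\<^sub>v v = 0\<^sub>v C"
      have "v = (B * G) *\<^sub>v v" using BG dB v by simp
      also have "\<dots> = B *\<^sub>v (G *\<^sub>v v)" using B Gc v by simp
      also have "\<dots> = B *\<^sub>v 0\<^sub>v C" using Gv0 by simp
      also have "\<dots> = 0\<^sub>v C" using B by auto
      finally show "v = 0\<^sub>v C" .
    qed
  next
    assume vi: "\<forall>v\<in>carrier_vec C. G *\<^sub>v v = 0\<^sub>v C \<longrightarrow> v = 0\<^sub>v C"
    have "det G \<noteq> 0" using det_0_iff_vec_prod_zero_field[OF Gc] vi by blast
    from det_non_zero_imp_unit[OF Gc this, of "()"]
    obtain B where B: "B \<in> carrier_mat C C" and GB: "G * B = 1\<^sub>m C" and BG: "B * G = 1\<^sub>m C"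
      unfolding Units_def ring_mat_def by auto
    show "invertible_mat G" unfolding invertible_mat_def inverts_mat_def square_mat.simps
      using B Gc GB BG by auto
  qed
  thus ?thesis using vinj G_eq unfolding G_def by simp
qed

end

theorem proposition1:
  fixes N E :: nat and src tgt :: "nat \<Rightarrow> nat"
    and x p :: "real vec" and r :: nat and \<theta>r :: real and Nm :: "real mat"
  assumes "connected_graph N E src tgt"
    and "x \<in> carrier_vec E"
    and "p \<in> carrier_vec N"
    and "(\<Sum>i<N. p $ i) = 0"
    and "r < N"
    and "cycle_matrix N E src tgt Nm"
  shows "(\<exists>!(f, \<theta>). dc_pf_solution N E src tgt x p r \<theta>r f \<theta>) \<longleftrightarrow>
         (\<not> has_cycle E src tgt \<or>
          (has_cycle E src tgt \<and>
           invertible_mat (transpose_mat Nm * mat_diag E (\<lambda>e. x $ e) * Nm)))"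
proof -
  interpret d: dcg N E src tgt Nm r using assms by unfold_locales auto
  have L: "(\<exists>!(f, \<theta>). dc_pf_solution N E src tgt x p r \<theta>r f \<theta>) \<longleftrightarrow> d.Ginj (\<lambda>e. x $ e)"
    using d.lhs_iff[OF assms(2,3,4)] d.kern_iff by simp
  have R: "invertible_mat (transpose_mat Nm * mat_diag E (\<lambda>e. x $ e) * Nm) \<longleftrightarrow> d.Ginj (\<lambda>e. x $ e)"
    by (rule d.inv_iff)
  have nc: "E + 1 - N = 0" if "\<not> has_cycle E src tgt"
  proof (rule ccontr)
    assume "E + 1 - N \<noteq> 0"
    hence "0 < E + 1 - N" by simp
    then obtain vs es where "is_cycle E src tgt vs es"
      using assms(6) unfolding cycle_matrix_def by blast
    thus False using that unfolding has_cycle_def by blast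
  qed
  have "\<not> has_cycle E src tgt \<Longrightarrow> d.Ginj (\<lambda>e. x $ e)"
    using nc unfolding d.Ginj_def by simp
  thus ?thesis using L R by blast
qed

end
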